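(* Let $\Omega_M=\mathbb R^p$, $\mathcal H=\mathbb R$, and let $M$ be a random vector in $\mathbb R^p$ with invertible covariance matrix $\mathrm{var}(M)$. Let $V_I$ be a real random variable, and let $\kappa_M(m_1,m_2)=c+m_1^\top m_2$ for a constant $c$. Assume the moments and range conditions below hold, so that the weak conditional mean is defined. Then $$\mathbb E[V_I\,\|\,M=m]=\beta_0+\beta^\top(m-\mathbb EM),$$ where $\beta_0=\mathbb EV_I$ and $\beta^\top=\mathrm{cov}(V_I,M)\,[\mathrm{var}(M)]^{-1}$, with $\mathrm{cov}(V_I,M)\in\mathbb R^{1\times p}$.
   Context: Let $\mathcal M$ be the RKHS of $\kappa_M$, $\tau_M(m)=\kappa_M(\cdot,m)$, and $\mu_M=\mathbb E\tau_M(M)$. Define $\Sigma_{MM}=\mathbb E[(\tau_M(M)-\mu_M)\otimes(\tau_M(M)-\mu_M)]$ and $\Sigma_{MV}=\mathbb E[(\tau_M(M)-\mu_M)\otimes(V_I-\mathbb EV_I)]$, with $\Sigma_{VM}$ the adjoint of $\Sigma_{MV}$ and $(a\otimes b)h=\langle b,h\rangle a$. $\Sigma_{MM}^\dagger$ is the Moore–Penrose inverse. Assume $\mathbb E\kappa_M(M,M)<\infty$, $\mathbb E[\kappa_M(M,M)^{1/2}|V_I|]<\infty$, $\mathrm{ran}\Sigma_{MV}\subset\mathrm{ran}\Sigma_{MM}$, and that $\Sigma_{MM}^\dagger\Sigma_{MV}$ is bounded. The weak conditional mean of $V_I$ given $M$ is $\mathbb E[V_I\,\|\,M=m]=\mathbb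 EV_I+\lambda(m)-\mathbb E\lambda(M)$, where $\lambda(m)$ is the Riesz representer of $v\mapsto(\Sigma_{MM}^\dagger\Sigma_{MV}v)(m)$. Equivalently, $$\mathbb E[V_I\,\|\,M=m]=\mathbb EV_I+\Sigma_{VM}\Sigma_{MM}^\dagger(\tau_M(m)-\mu_M).$$ *)

theory Defs
  imports "HOL-Probability.Probability"
begin

text \<open>The RKHS of the kernel is represented abstractly by a real Hilbert space 'h together
with its canonical feature map tau, which reproduces the kernel and whose range spans a dense
subspace; this is the RKHS up to the isometry h \<mapsto> (\<lambda>m. inner h (tau m)).\<close>

definition is_rkhs_feature_map ::
  "('m \<Rightarrow> 'm \<Rightarrow> real) \<Rightarrow> ('m \<Rightarrow> 'h::real_inner) \<Rightarrow> bool" where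
  "is_rkhs_feature_map kappa tau \<longleftrightarrow>
     (\<forall>x y. inner (tau x) (tau y) = kappa x y) \<and> closure (span (range tau)) = UNIV"

definition mp_inv :: "('h::real_inner \<Rightarrow> 'h) \<Rightarrow> 'h \<Rightarrow> 'h" where
  "mp_inv A y = (THE x. A x = y \<and> (\<forall>z. A z = 0 \<longrightarrow> inner x z = 0))"

definition mean_emb ::
  "'a measure \<Rightarrow> ('m \<Rightarrow> 'h::{real_inner,complete_space,second_countable_topology})
     \<Rightarrow> ('a \<Rightarrow> 'm) \<Rightarrow> 'h" where
  "mean_emb P tau M = (\<integral>\<omega>. tau (M \<omega>) \<partial>P)"

definition cov_MM ::
  "'a measure \<Rightarrow> ('m \<Rightarrow> 'h::{real_inner,complete_space,second_countable_topology})
     \<Rightarrow> ('a \<Rightarrow> 'm) \<Rightarrow> 'h \<Rightarrow> 'h" where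
  "cov_MM P tau M h =
     (\<integral>\<omega>. inner (tau (M \<omega>) - mean_emb P tau M) h *\<^sub>R (tau (M \<omega>) - mean_emb P tau M) \<partial>P)"

definition cov_MV ::
  "'a measure \<Rightarrow> ('m \<Rightarrow> 'h::{real_inner,complete_space,second_countable_topology})
     \<Rightarrow> ('a \<Rightarrow> 'm) \<Rightarrow> ('a \<Rightarrow> real) \<Rightarrow> real \<Rightarrow> 'h" where
  "cov_MV P tau M V v =
     (\<integral>\<omega>. ((V \<omega> - (\<integral>\<omega>'. V \<omega>' \<partial>P)) * v) *\<^sub>R (tau (M \<omega>) - mean_emb P tau M) \<partial>P)"

text \<open>Weak conditional mean E[V || M = m] = E V + lambda(m) - E lambda(M), where (since the
value space is R) lambda(m) is the value at m of the RKHS function Sigma_MM^dagger Sigma_MV 1.\<close>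
definition weak_cond_mean ::
  "'a measure \<Rightarrow> ('m \<Rightarrow> 'h::{real_inner,complete_space,second_countable_topology})
     \<Rightarrow> ('a \<Rightarrow> 'm) \<Rightarrow> ('a \<Rightarrow> real) \<Rightarrow> 'm \<Rightarrow> real" where
  "weak_cond_mean P tau M V m =
     (let g = mp_inv (cov_MM P tau M) (cov_MV P tau M V 1);
          lam = (\<lambda>x. inner g (tau x))
      in (\<integral>\<omega>. V \<omega> \<partial>P) + lam m - (\<integral>\<omega>. lam (M \<omega>) \<partial>P))"

definition mean_vec :: "'a measure \<Rightarrow> ('a \<Rightarrow> real^'p) \<Rightarrow> real^'p" where
  "mean_vec P M = (\<chi> i. \<integral>\<omega>. M \<omega> $ i \<partial>P)"

definition var_mat :: "'a measure \<Rightarrow> ('a \<Rightarrow> real^'p) \<Rightarrow> real^'p^'p" where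
  "var_mat P M = (\<chi> i j. \<integral>\<omega>. (M \<omega> $ i - mean_vec P M $ i) * (M \<omega> $ j - mean_vec P M $ j) \<partial>P)"

text \<open>cov(V, M) as a row vector (element of R^p, multiplied from the left with v*).\<close>
definition cov_vec :: "'a measure \<Rightarrow> ('a \<Rightarrow> real) \<Rightarrow> ('a \<Rightarrow> real^'p) \<Rightarrow> real^'p" where
  "cov_vec P V M = (\<chi> j. \<integral>\<omega>. (V \<omega> - (\<integral>\<omega>'. V \<omega>' \<partial>P)) * (M \<omega> $ j - mean_vec P M $ j) \<partial>P)"

end

theory Submission
  imports Defs
begin

lemma rkhs_zero:
  assumes "is_rkhs_feature_map k (tau :: 'm \<Rightarrow> 'h::real_inner)"
    and "\<And>z. inner w (tau z) = 0"
  shows "w = 0"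
proof -
  have sub: "span (range tau) \<subseteq> {x. w \<bullet> x = 0}"
  proof
    fix x assume "x \<in> span (range tau)"
    then have "orthogonal w x"
      by (rule orthogonal_to_span) (auto simp: orthogonal_def assms(2))
    then show "x \<in> {x. w \<bullet> x = 0}" by (simp add: orthogonal_def)
  qed
  have "closure (span (range tau)) \<subseteq> {x. w \<bullet> x = 0}"
    by (rule closure_minimal[OF sub closed_hyperplane])
  then have "w \<in> {x. w \<bullet> x = 0}" using assms(1) unfolding is_rkhs_feature_map_def by blast
  then show ?thesis by simp
qed

lemma rkhs_ext:
  assumes "is_rkhs_feature_map k (tau :: 'm \<Rightarrow> 'h::real_inner)"
    and "\<And>z. inner a (tau z) = inner b (tau z)"
  shows "a = b"
proof -
  have "a - b = 0"
    by (rule rkhs_zero[OF assms(1)]) (simp add: inner_diff_left assms(2))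
  then show ?thesis by simp
qed

lemma int_bnd:
  fixes g :: "'a \<Rightarrow> 'b::{banach,second_countable_topology}"
  assumes "integrable P f" "g \<in> borel_measurable P" "\<And>\<omega>. norm (g \<omega>) \<le> f \<omega>"
  shows "integrable P g"
proof (rule Bochner_Integration.integrable_bound[OF assms(1,2)])
  show "AE x in P. norm (g x) \<le> norm (f x)"
    using assms(3) by (intro AE_I2) (metis abs_ge_self order_trans real_norm_def)
qed

lemma cmeas:
  assumes "M \<in> borel_measurable P" "continuous_on UNIV F"
  shows "(\<lambda>\<omega>. F (M \<omega>)) \<in> borel_measurable P"
  by (rule borel_measurable_continuous_on[OF assms(2,1)])

lemma aux_le: "(t::real) \<le> 1 + t\<^sup>2"
  by (smt (verit, ccfv_SIG) one_le_numeral power_increasing power_one_right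
    real_sqrt_pow2 zero_less_power2)
lemma aux_sqrt: "0 \<le> (t::real) \<Longrightarrow> sqrt t \<le> 1 + t"
  using aux_le[of "sqrt t"] by simp
lemma aux_sq: "(norm (a - b :: 'a::real_normed_vector))\<^sup>2 \<le> 2 * (norm a)\<^sup>2 + 2 * (norm b)\<^sup>2"
proof -
  have "norm (a - b) \<le> norm a + norm b" by (rule norm_triangle_ineq4)
  then have "(norm (a - b))\<^sup>2 \<le> (norm a + norm b)\<^sup>2" by (simp add: power_mono)
  also have "\<dots> \<le> 2 * (norm a)\<^sup>2 + 2 * (norm b)\<^sup>2"
    using sum_power2_ge_zero[of "norm a - norm b" 0] by (simp add: power2_eq_square algebra_simps)
  finally show ?thesis .
qed
theorem proposition2:
  fixes P :: "'a measure" and M :: "'a \<Rightarrow> real^'p" and V :: "'a \<Rightarrow> real"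
    and c :: real
    and tau :: "real^'p \<Rightarrow> 'h::{real_inner,complete_space,second_countable_topology}"
  assumes "prob_space P"
    and "M \<in> borel_measurable P" and "V \<in> borel_measurable P"
    and "is_rkhs_feature_map (\<lambda>m1 m2. c + m1 \<bullet> m2) tau"
    and "invertible (var_mat P M)"
    and "integrable P V"
    and "integrable P (\<lambda>\<omega>. c + M \<omega> \<bullet> M \<omega>)"
    and "integrable P (\<lambda>\<omega>. sqrt (c + M \<omega> \<bullet> M \<omega>) * \<bar>V \<omega>\<bar>)"
    and "range (cov_MV P tau M V) \<subseteq> range (cov_MM P tau M)"
    and "bounded_linear (\<lambda>v. mp_inv (cov_MM P tau M) (cov_MV P tau M V v))"
  shows "\<forall>m. weak_cond_mean P tau M V m =
           (\<integral>\<omega>. V \<omega> \<partial>P) + (cov_vec P V M v* matrix_inv (var_mat P M)) \<bullet> (m - mean_vec P M)"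
proof -
  interpret prob_space P by (rule assms(1))
  have Mm: "M \<in> borel_measurable P" by (rule assms(2))
  have tauin: "\<And>x y. inner (tau x) (tau y) = c + x \<bullet> y"
    using assms(4) by (simp add: is_rkhs_feature_map_def)
  define e where "e = tau 0"
  define L where "L x = tau x - e" for x
  have L_tau: "\<And>x z. inner (L x) (tau z) = x \<bullet> z"
    by (simp add: L_def e_def inner_diff_left tauin)
  have ext: "\<And>a b. (\<And>z. inner a (tau z) = inner b (tau z)) \<Longrightarrow> a = b"
    using rkhs_ext[OF assms(4)] by blast
  have L_add: "\<And>x y. L (x + y) = L x + L y"
    by (rule ext) (simp add: inner_add_left L_tau)
  have L_scale: "\<And>r x. L (r *\<^sub>R x) = r *\<^sub>R L x"
    by (rule ext) (simp add: L_tau)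
  have lin: "linear L" by (rule linearI[OF L_add L_scale])
  have bl: "bounded_linear L" using lin by (simp add: linear_conv_bounded_linear)
  have L_inner: "\<And>x y. inner (L x) (L y) = x \<bullet> y"
  proof -
    fix x y
    have "inner (L x) (L y) = inner (L x) (tau y) - inner (L x) e"
      by (simp add: L_def inner_diff_right)
    also have "\<dots> = x \<bullet> y" by (simp add: L_tau e_def)
    finally show "inner (L x) (L y) = x \<bullet> y" .
  qed
  have norm_L: "\<And>x. norm (L x) = norm x"
    by (simp add: norm_eq_sqrt_inner L_inner)
  have tau_split: "\<And>x. tau x = e + L x" by (simp add: L_def)
  have c_nn: "0 \<le> c"
  proof -
    have "c = inner (tau 0) (tau 0)" using tauin[of 0 0] by simp
    then show ?thesis by simp
  qed
  have norm_tau: "\<And>x. norm (tau x) = sqrt (c + x \<bullet> x)"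
    by (simp add: norm_eq_sqrt_inner tauin)
  have tau_eq: "tau = (\<lambda>x. e + L x)" using tau_split by auto
  have conttau: "continuous_on UNIV tau"
    unfolding tau_eq by (intro continuous_intros bounded_linear.continuous_on[OF bl])

  define \<mu> where "\<mu> = mean_vec P M"
  define D where "D \<omega> = M \<omega> - \<mu>" for \<omega>
  define EV where "EV = (\<integral>\<omega>. V \<omega> \<partial>P)"
  have iMM: "integrable P (\<lambda>\<omega>. M \<omega> \<bullet> M \<omega>)"
  proof -
    have "integrable P (\<lambda>\<omega>. (c + M \<omega> \<bullet> M \<omega>) - c)"
      using assms(7) by (intro Bochner_Integration.integrable_diff) auto
    then show ?thesis by simp
  qed
  have iNM: "integrable P (\<lambda>\<omega>. norm (M \<omega>))"
  proof (rule int_bnd[of P "\<lambda>\<omega>. 1 + M \<omega> \<bullet> M \<omega>"])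
    show "integrable P (\<lambda>\<omega>. 1 + M \<omega> \<bullet> M \<omega>)" using iMM by auto
    show "(\<lambda>\<omega>. norm (M \<omega>)) \<in> borel_measurable P" using Mm by measurable
    fix \<omega> show "norm (norm (M \<omega>)) \<le> 1 + M \<omega> \<bullet> M \<omega>"
      using aux_le[of "norm (M \<omega>)"] by (simp add: power2_norm_eq_inner)
  qed
  have iMi: "\<And>i. integrable P (\<lambda>\<omega>. M \<omega> $ i)"
    by (rule int_bnd[OF iNM]) (auto intro!: cmeas[OF Mm] continuous_intros simp: component_le_norm_cart)
  have iMz: "\<And>y. integrable P (\<lambda>\<omega>. M \<omega> \<bullet> y)"
    unfolding inner_vec_def inner_real_def by (auto intro!: Bochner_Integration.integrable_sum integrable_mult_left iMi)
  have Lin: "\<And>y. (\<integral>\<omega>. M \<omega> \<bullet> y \<partial>P) = \<mu> \<bullet> y"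
  proof -
    fix y
    have "(\<integral>\<omega>. M \<omega> \<bullet> y \<partial>P) = (\<integral>\<omega>. (\<Sum>i\<in>UNIV. M \<omega> $ i * y $ i) \<partial>P)"
      by (simp add: inner_vec_def)
    also have "\<dots> = (\<Sum>i\<in>UNIV. (\<integral>\<omega>. M \<omega> $ i \<partial>P) * y $ i)"
      by (subst Bochner_Integration.integral_sum) (auto intro!: iMi)
    also have "\<dots> = \<mu> \<bullet> y" by (simp add: inner_vec_def \<mu>_def mean_vec_def)
    finally show "(\<integral>\<omega>. M \<omega> \<bullet> y \<partial>P) = \<mu> \<bullet> y" .
  qed
  have iD2: "integrable P (\<lambda>\<omega>. (norm (D \<omega>))\<^sup>2)"
  proof (rule int_bnd[of P "\<lambda>\<omega>. 2 * (M \<omega> \<bullet> M \<omega>) + 2 * (norm \<mu>)\<^sup>2"])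
    show "integrable P (\<lambda>\<omega>. 2 * (M \<omega> \<bullet> M \<omega>) + 2 * (norm \<mu>)\<^sup>2)" using iMM by auto
    show "(\<lambda>\<omega>. (norm (D \<omega>))\<^sup>2) \<in> borel_measurable P"
      unfolding D_def by (intro cmeas[OF Mm] continuous_intros)
    fix \<omega> show "norm ((norm (D \<omega>))\<^sup>2) \<le> 2 * (M \<omega> \<bullet> M \<omega>) + 2 * (norm \<mu>)\<^sup>2"
      using aux_sq[of "M \<omega>" \<mu>] by (simp add: D_def power2_norm_eq_inner)
  qed
  have iDD: "\<And>i j. integrable P (\<lambda>\<omega>. D \<omega> $ i * D \<omega> $ j)"
  proof (rule int_bnd[OF iD2])
    fix i j
    show "(\<lambda>\<omega>. D \<omega> $ i * D \<omega> $ j) \<in> borel_measurable P"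
      unfolding D_def by (intro cmeas[OF Mm] continuous_intros)
    fix \<omega> show "norm (D \<omega> $ i * D \<omega> $ j) \<le> (norm (D \<omega>))\<^sup>2"
      unfolding power2_eq_square real_norm_def abs_mult
      by (intro mult_mono component_le_norm_cart) auto
  qed
  have iB: "integrable P (\<lambda>\<omega>. sqrt (c + M \<omega> \<bullet> M \<omega>) * \<bar>V \<omega>\<bar> + norm \<mu> * \<bar>V \<omega>\<bar>
      + \<bar>EV\<bar> * norm (M \<omega>) + \<bar>EV\<bar> * norm \<mu>)"
    using assms(8,6) iNM by (intro Bochner_Integration.integrable_add integrable_mult_right integrable_abs) auto
  have VD_le: "\<And>\<omega>. \<bar>V \<omega> - EV\<bar> * norm (D \<omega>) \<le> sqrt (c + M \<omega> \<bullet> M \<omega>) * \<bar>V \<omega>\<bar> + norm \<mu> * \<bar>V \<omega>\<bar>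
      + \<bar>EV\<bar> * norm (M \<omega>) + \<bar>EV\<bar> * norm \<mu>"
  proof -
    fix \<omega>
    have a: "\<bar>V \<omega> - EV\<bar> \<le> \<bar>V \<omega>\<bar> + \<bar>EV\<bar>" by simp
    have b: "norm (D \<omega>) \<le> norm (M \<omega>) + norm \<mu>" unfolding D_def by (rule norm_triangle_ineq4)
    have "\<bar>V \<omega> - EV\<bar> * norm (D \<omega>) \<le> (\<bar>V \<omega>\<bar> + \<bar>EV\<bar>) * (norm (M \<omega>) + norm \<mu>)"
      by (intro mult_mono a b) auto
    also have "\<dots> = \<bar>V \<omega>\<bar> * norm (M \<omega>) + norm \<mu> * \<bar>V \<omega>\<bar> + \<bar>EV\<bar> * norm (M \<omega>) + \<bar>EV\<bar> * norm \<mu>"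
      by (simp add: algebra_simps)
    also have "\<bar>V \<omega>\<bar> * norm (M \<omega>) \<le> sqrt (c + M \<omega> \<bullet> M \<omega>) * \<bar>V \<omega>\<bar>"
    proof -
      have "norm (M \<omega>) \<le> sqrt (c + M \<omega> \<bullet> M \<omega>)"
        unfolding norm_eq_sqrt_inner using c_nn by simp
      then show ?thesis by (simp add: mult.commute mult_left_mono)
    qed
    finally show "\<bar>V \<omega> - EV\<bar> * norm (D \<omega>) \<le> sqrt (c + M \<omega> \<bullet> M \<omega>) * \<bar>V \<omega>\<bar> + norm \<mu> * \<bar>V \<omega>\<bar>
      + \<bar>EV\<bar> * norm (M \<omega>) + \<bar>EV\<bar> * norm \<mu>" by simp
  qed
  have iVD: "\<And>j. integrable P (\<lambda>\<omega>. (V \<omega> - EV) * D \<omega> $ j)"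
  proof (rule int_bnd[OF iB])
    fix j
    have "(\<lambda>\<omega>. D \<omega> $ j) \<in> borel_measurable P"
      unfolding D_def by (intro cmeas[OF Mm] continuous_intros)
    then show "(\<lambda>\<omega>. (V \<omega> - EV) * D \<omega> $ j) \<in> borel_measurable P"
      using assms(3) by measurable
    fix \<omega>
    have "norm ((V \<omega> - EV) * D \<omega> $ j) \<le> \<bar>V \<omega> - EV\<bar> * norm (D \<omega>)"
      by (simp add: abs_mult mult_left_mono component_le_norm_cart)
    then show "norm ((V \<omega> - EV) * D \<omega> $ j) \<le> sqrt (c + M \<omega> \<bullet> M \<omega>) * \<bar>V \<omega>\<bar> + norm \<mu> * \<bar>V \<omega>\<bar>
      + \<bar>EV\<bar> * norm (M \<omega>) + \<bar>EV\<bar> * norm \<mu>" using VD_le[of \<omega>] by linarith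
  qed
  have iM: "integrable P M"
    by (rule int_bnd[OF iNM Mm]) simp
  have iVL: "integrable P (\<lambda>\<omega>. ((V \<omega> - EV) * 1) *\<^sub>R L (D \<omega>))"
  proof -
    have "integrable P (\<lambda>\<omega>. ((V \<omega> - EV) * 1) *\<^sub>R D \<omega>)"
    proof (rule int_bnd[OF iB])
      have "D \<in> borel_measurable P"
        unfolding D_def by (intro cmeas[OF Mm] continuous_intros)
      then show "(\<lambda>\<omega>. ((V \<omega> - EV) * 1) *\<^sub>R D \<omega>) \<in> borel_measurable P"
        using assms(3) by measurable
      fix \<omega>
      show "norm (((V \<omega> - EV) * 1) *\<^sub>R D \<omega>) \<le> sqrt (c + M \<omega> \<bullet> M \<omega>) * \<bar>V \<omega>\<bar> + norm \<mu> * \<bar>V \<omega>\<bar>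
        + \<bar>EV\<bar> * norm (M \<omega>) + \<bar>EV\<bar> * norm \<mu>" using VD_le[of \<omega>] by simp
    qed
    from integrable_bounded_linear[OF bl this] show ?thesis by (simp add: L_scale)
  qed
  have itau: "integrable P (\<lambda>\<omega>. tau (M \<omega>))"
  proof -
    have "integrable P (\<lambda>\<omega>. e + L (M \<omega>))"
      by (intro Bochner_Integration.integrable_add integrable_const integrable_bounded_linear[OF bl iM])
    then show ?thesis by (simp add: tau_split)
  qed
  have me: "mean_emb P tau M = e + L \<mu>"
  proof (rule ext)
    fix z
    have "inner (mean_emb P tau M) (tau z) = (\<integral>\<omega>. inner (tau (M \<omega>)) (tau z) \<partial>P)"
      unfolding mean_emb_def by (rule integral_inner_left[symmetric]) (use itau in auto)
    also have "\<dots> = (\<integral>\<omega>. c + M \<omega> \<bullet> z \<partial>P)" by (simp add: tauin)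
    also have "\<dots> = c + \<mu> \<bullet> z"
      using iMz[of z] by (simp add: Bochner_Integration.integral_add Lin prob_space)
    also have "\<dots> = inner (e + L \<mu>) (tau z)" by (simp add: inner_add_left L_tau e_def tauin)
    finally show "inner (mean_emb P tau M) (tau z) = inner (e + L \<mu>) (tau z)" .
  qed
  have F3: "\<And>\<omega>. tau (M \<omega>) - mean_emb P tau M = L (D \<omega>)"
    by (simp add: me D_def linear_diff[OF lin] tau_split)
  have cMM: "\<And>a. cov_MM P tau M a = (\<integral>\<omega>. inner (L (D \<omega>)) a *\<^sub>R L (D \<omega>) \<partial>P)"
    by (simp add: cov_MM_def F3)
  have iLa: "\<And>a. integrable P (\<lambda>\<omega>. inner (L (D \<omega>)) a *\<^sub>R L (D \<omega>))"
  proof -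
    fix a
    have "integrable P (\<lambda>\<omega>. inner (L (D \<omega>)) a *\<^sub>R D \<omega>)"
    proof (rule int_bnd[of P "\<lambda>\<omega>. norm a * (norm (D \<omega>))\<^sup>2"])
      show "integrable P (\<lambda>\<omega>. norm a * (norm (D \<omega>))\<^sup>2)" using iD2 by auto
      show "(\<lambda>\<omega>. inner (L (D \<omega>)) a *\<^sub>R D \<omega>) \<in> borel_measurable P"
        unfolding D_def by (intro cmeas[OF Mm] continuous_intros bounded_linear.continuous_on[OF bl])
      fix \<omega>
      have "norm (inner (L (D \<omega>)) a *\<^sub>R D \<omega>) = \<bar>inner (L (D \<omega>)) a\<bar> * norm (D \<omega>)"
        by simp
      also have "\<dots> \<le> (norm (D \<omega>) * norm a) * norm (D \<omega>)"
        by (intro mult_right_mono) (auto simp: norm_L[symmetric] intro: Cauchy_Schwarz_ineq2)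
      finally show "norm (inner (L (D \<omega>)) a *\<^sub>R D \<omega>) \<le> norm a * (norm (D \<omega>))\<^sup>2"
        by (simp add: power2_eq_square mult_ac)
    qed
    from integrable_bounded_linear[OF bl this]
    show "integrable P (\<lambda>\<omega>. inner (L (D \<omega>)) a *\<^sub>R L (D \<omega>))" by (simp add: L_scale)
  qed
  have K1: "\<And>a b. inner (cov_MM P tau M a) b
      = (\<integral>\<omega>. inner (L (D \<omega>)) a * inner (L (D \<omega>)) b \<partial>P)"
  proof -
    fix a b
    have "inner (cov_MM P tau M a) b = (\<integral>\<omega>. inner (inner (L (D \<omega>)) a *\<^sub>R L (D \<omega>)) b \<partial>P)"
      unfolding cMM by (rule integral_inner_left[symmetric]) (use iLa in auto)
    then show "inner (cov_MM P tau M a) b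
      = (\<integral>\<omega>. inner (L (D \<omega>)) a * inner (L (D \<omega>)) b \<partial>P)" by simp
  qed
  have Q1: "\<And>y z. (\<integral>\<omega>. (D \<omega> \<bullet> y) * (D \<omega> \<bullet> z) \<partial>P) = y \<bullet> (var_mat P M *v z)"
  proof -
    fix y z
    have "(\<integral>\<omega>. (D \<omega> \<bullet> y) * (D \<omega> \<bullet> z) \<partial>P)
        = (\<integral>\<omega>. (\<Sum>i\<in>UNIV. \<Sum>j\<in>UNIV. (y$i * z$j) * (D \<omega> $ i * D \<omega> $ j)) \<partial>P)"
      by (simp add: inner_vec_def sum_product mult_ac)
    also have "\<dots> = (\<Sum>i\<in>UNIV. \<Sum>j\<in>UNIV. (y$i * z$j) * (\<integral>\<omega>. D \<omega> $ i * D \<omega> $ j \<partial>P))"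
      by (simp add: Bochner_Integration.integral_sum iDD Bochner_Integration.integrable_sum)
    also have "\<dots> = y \<bullet> (var_mat P M *v z)"
      by (simp add: inner_vec_def matrix_vector_mult_def var_mat_def D_def \<mu>_def sum_distrib_left mult_ac)
    finally show "(\<integral>\<omega>. (D \<omega> \<bullet> y) * (D \<omega> \<bullet> z) \<partial>P) = y \<bullet> (var_mat P M *v z)" .
  qed
  have Q2: "\<And>z. (\<integral>\<omega>. (V \<omega> - EV) * (D \<omega> \<bullet> z) \<partial>P) = cov_vec P V M \<bullet> z"
  proof -
    fix z
    have "(\<integral>\<omega>. (V \<omega> - EV) * (D \<omega> \<bullet> z) \<partial>P)
        = (\<integral>\<omega>. (\<Sum>j\<in>UNIV. z$j * ((V \<omega> - EV) * D \<omega> $ j)) \<partial>P)"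
      by (simp add: inner_vec_def sum_distrib_left mult_ac)
    also have "\<dots> = (\<Sum>j\<in>UNIV. z$j * (\<integral>\<omega>. (V \<omega> - EV) * D \<omega> $ j \<partial>P))"
      by (simp add: Bochner_Integration.integral_sum iVD)
    also have "\<dots> = cov_vec P V M \<bullet> z"
      by (simp add: inner_vec_def cov_vec_def D_def \<mu>_def EV_def mult_ac)
    finally show "(\<integral>\<omega>. (V \<omega> - EV) * (D \<omega> \<bullet> z) \<partial>P) = cov_vec P V M \<bullet> z" .
  qed
  have K2: "cov_MV P tau M V 1 = L (cov_vec P V M)"
  proof (rule ext)
    fix z
    have "cov_MV P tau M V 1 = (\<integral>\<omega>. ((V \<omega> - EV) * 1) *\<^sub>R L (D \<omega>) \<partial>P)"
      unfolding cov_MV_def EV_def[symmetric] F3 ..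
    then have "inner (cov_MV P tau M V 1) (tau z)
        = (\<integral>\<omega>. inner (((V \<omega> - EV) * 1) *\<^sub>R L (D \<omega>)) (tau z) \<partial>P)"
      by (simp only:) (rule integral_inner_left[symmetric], use iVL in auto)
    also have "\<dots> = (\<integral>\<omega>. (V \<omega> - EV) * (D \<omega> \<bullet> z) \<partial>P)" by (simp add: L_tau)
    also have "\<dots> = inner (L (cov_vec P V M)) (tau z)" by (simp add: Q2 L_tau)
    finally show "inner (cov_MV P tau M V 1) (tau z) = inner (L (cov_vec P V M)) (tau z)" .
  qed
  have K3: "\<And>w. cov_MM P tau M (L w) = L (w v* var_mat P M)"
  proof (rule ext)
    fix w z
    have "inner (cov_MM P tau M (L w)) (tau z) = (\<integral>\<omega>. (D \<omega> \<bullet> w) * (D \<omega> \<bullet> z) \<partial>P)"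
      by (simp add: K1 L_inner L_tau)
    also have "\<dots> = inner (L (w v* var_mat P M)) (tau z)"
      by (simp add: Q1 L_tau dot_lmul_matrix)
    finally show "inner (cov_MM P tau M (L w)) (tau z) = inner (L (w v* var_mat P M)) (tau z)" .
  qed
  have K4: "\<And>a b. cov_MM P tau M a - cov_MM P tau M b = cov_MM P tau M (a - b)"
    unfolding cMM by (subst Bochner_Integration.integral_diff[symmetric])
      (auto intro!: iLa simp: inner_diff_right scaleR_diff_left)
  have K5: "\<And>a b. inner (cov_MM P tau M a) b = inner a (cov_MM P tau M b)"
    by (subst (2) inner_commute) (simp add: K1 mult.commute)

  define S where "S = var_mat P M"
  define Si where "Si = matrix_inv S"
  have Si: "Si ** S = mat 1"
    using someI_ex[OF assms(5)[unfolded invertible_def]] by (auto simp: Si_def matrix_inv_def S_def)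
  define s where "s = cov_vec P V M"
  define y where "y = s v* Si"
  define y' where "y' = y v* Si"
  have Ly: "cov_MM P tau M (L y) = L s"
    using K3 by (simp add: y_def vector_matrix_mul_assoc Si S_def[symmetric])
  have Ly': "cov_MM P tau M (L y') = L y"
    using K3 by (simp add: y'_def vector_matrix_mul_assoc Si S_def[symmetric])
  have Pr: "cov_MM P tau M (L y) = L s \<and> (\<forall>z. cov_MM P tau M z = 0 \<longrightarrow> inner (L y) z = 0)"
  proof (intro conjI allI impI Ly)
    fix z assume "cov_MM P tau M z = 0"
    then show "inner (L y) z = 0" using K5[of "L y'" z] by (simp add: Ly')
  qed
  have mp: "mp_inv (cov_MM P tau M) (cov_MV P tau M V 1) = L y"
    unfolding mp_inv_def K2 s_def[symmetric]
  proof (rule the_equality)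
    show "cov_MM P tau M (L y) = L s \<and> (\<forall>z. cov_MM P tau M z = 0 \<longrightarrow> inner (L y) z = 0)" by (rule Pr)
  next
    fix x assume x: "cov_MM P tau M x = L s \<and> (\<forall>z. cov_MM P tau M z = 0 \<longrightarrow> inner x z = 0)"
    define w where "w = x - L y"
    have "cov_MM P tau M w = 0" using K4[of x "L y"] x Ly by (simp add: w_def)
    then have "inner x w = 0" "inner (L y) w = 0" using x Pr by auto
    then have "inner w w = 0" by (simp add: w_def inner_diff_left)
    then show "x = L y" by (simp add: w_def)
  qed
  show ?thesis
  proof
    fix m
    have "weak_cond_mean P tau M V m = EV + y \<bullet> m - (\<integral>\<omega>. y \<bullet> M \<omega> \<partial>P)"
      by (simp add: weak_cond_mean_def Let_def mp L_tau EV_def)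
    also have "(\<integral>\<omega>. y \<bullet> M \<omega> \<partial>P) = y \<bullet> \<mu>" using Lin[of y] by (simp add: inner_commute)
    finally show "weak_cond_mean P tau M V m =
           (\<integral>\<omega>. V \<omega> \<partial>P) + (cov_vec P V M v* matrix_inv (var_mat P M)) \<bullet> (m - mean_vec P M)"
      by (simp add: y_def s_def Si_def S_def \<mu>_def EV_def inner_diff_right)
  qed
qed

end
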